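(* Let $G$ be a $d$-regular bicirculant nut graph of order $n$. Then (i) $n$ and $d$ are both even, and at least one of them is divisible by $4$; and (ii) $d \ge 4$ and $n \ge d+4$.
   Context: A bicirculant graph is a graph that has an automorphism whose cycle decomposition on the vertex set consists of exactly two orbits of equal size. A nut graph is a graph with at least two vertices whose adjacency matrix has eigenvalue $0$ with multiplicity exactly one, such that the corresponding eigenvector has no zero entries. *)

theory Defs
  imports Complex_Main
begin

definition simple_graph :: "nat \<Rightarrow> (nat \<Rightarrow> nat \<Rightarrow> bool) \<Rightarrow> bool" where
  "simple_graph n E \<longleftrightarrow> (\<forall>i j. E i j \<longrightarrow> i < n \<and> j < n \<and> i \<noteq> j \<and> E j i)"

definition regular_graph :: "nat \<Rightarrow> (nat \<Rightarrow> nat \<Rightarrow> bool) \<Rightarrow> nat \<Rightarrow> bool" where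
  "regular_graph n E d \<longleftrightarrow> (\<forall>i<n. card {j. j < n \<and> E i j} = d)"

definition adj_mult :: "nat \<Rightarrow> (nat \<Rightarrow> nat \<Rightarrow> bool) \<Rightarrow> (nat \<Rightarrow> real) \<Rightarrow> nat \<Rightarrow> real" where
  "adj_mult n E x i = (\<Sum>j<n. (if E i j then 1 else 0) * x j)"

definition kernel_vec :: "nat \<Rightarrow> (nat \<Rightarrow> nat \<Rightarrow> bool) \<Rightarrow> (nat \<Rightarrow> real) \<Rightarrow> bool" where
  "kernel_vec n E x \<longleftrightarrow> (\<forall>i\<ge>n. x i = 0) \<and> (\<forall>i<n. adj_mult n E x i = 0)"

text \<open>Nut graph: at least two vertices, eigenvalue 0 of A(G) has multiplicity exactly one
  (A(G) is symmetric, so algebraic = geometric multiplicity = dimension of the kernel),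
  and the spanning kernel vector has no zero entries.\<close>
definition nut_graph :: "nat \<Rightarrow> (nat \<Rightarrow> nat \<Rightarrow> bool) \<Rightarrow> bool" where
  "nut_graph n E \<longleftrightarrow> simple_graph n E \<and> n \<ge> 2 \<and>
     (\<exists>x. kernel_vec n E x \<and> (\<exists>i<n. x i \<noteq> 0) \<and>
          (\<forall>y. kernel_vec n E y \<longrightarrow> (\<exists>c. \<forall>i. y i = c * x i)) \<and>
          (\<forall>i<n. x i \<noteq> 0))"

definition graph_automorphism :: "nat \<Rightarrow> (nat \<Rightarrow> nat \<Rightarrow> bool) \<Rightarrow> (nat \<Rightarrow> nat) \<Rightarrow> bool" where
  "graph_automorphism n E \<sigma> \<longleftrightarrow> bij_betw \<sigma> {0..<n} {0..<n} \<and>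
     (\<forall>i<n. \<forall>j<n. E i j \<longleftrightarrow> E (\<sigma> i) (\<sigma> j))"

definition perm_orbit :: "(nat \<Rightarrow> nat) \<Rightarrow> nat \<Rightarrow> nat set" where
  "perm_orbit \<sigma> i = {(\<sigma> ^^ k) i | k. True}"

definition perm_orbits :: "nat \<Rightarrow> (nat \<Rightarrow> nat) \<Rightarrow> nat set set" where
  "perm_orbits n \<sigma> = perm_orbit \<sigma> ` {0..<n}"

definition bicirculant :: "nat \<Rightarrow> (nat \<Rightarrow> nat \<Rightarrow> bool) \<Rightarrow> bool" where
  "bicirculant n E \<longleftrightarrow> (\<exists>\<sigma>. graph_automorphism n E \<sigma> \<and> card (perm_orbits n \<sigma>) = 2 \<and>
     (\<forall>O1\<in>perm_orbits n \<sigma>. \<forall>O2\<in>perm_orbits n \<sigma>. card O1 = card O2))"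

end

theory Submission
  imports Defs
begin


locale autc =
  fixes n :: nat and E :: "nat \<Rightarrow> nat \<Rightarrow> bool" and \<sigma> :: "nat \<Rightarrow> nat"
  assumes aut: "graph_automorphism n E \<sigma>"
begin

lemma bij: "bij_betw \<sigma> {0..<n} {0..<n}"
  using aut unfolding graph_automorphism_def by blast

lemma s_in: "i < n \<Longrightarrow> \<sigma> i < n"
  using bij_betw_apply[OF bij] by auto

lemma s_inj: "i < n \<Longrightarrow> j < n \<Longrightarrow> \<sigma> i = \<sigma> j \<Longrightarrow> i = j"
  using bij_betw_imp_inj_on[OF bij] by (auto dest: inj_onD)

lemma s_E: "i < n \<Longrightarrow> j < n \<Longrightarrow> E (\<sigma> i) (\<sigma> j) = E i j"
  using aut unfolding graph_automorphism_def by blast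

lemma p_in: "i < n \<Longrightarrow> (\<sigma>^^k) i < n"
  by (induction k) (auto simp: s_in)

lemma p_inj: "i < n \<Longrightarrow> j < n \<Longrightarrow> (\<sigma>^^k) i = (\<sigma>^^k) j \<Longrightarrow> i = j"
proof (induction k)
  case (Suc k)
  then show ?case using s_inj p_in by (metis comp_apply funpow.simps(2))
qed simp

lemma p_E: "i < n \<Longrightarrow> j < n \<Longrightarrow> E ((\<sigma>^^k) i) ((\<sigma>^^k) j) = E i j"
  by (induction k) (auto simp: s_E p_in)

lemma p_add: "(\<sigma>^^a) ((\<sigma>^^b) i) = (\<sigma>^^(a+b)) i"
  by (simp add: funpow_add)

lemma ex_period: assumes "i < n" shows "\<exists>k>0. (\<sigma>^^k) i = i"
proof -
  let ?f = "\<lambda>k. (\<sigma>^^k) i"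
  have "?f ` {0..n} \<subseteq> {0..<n}" using p_in assms by auto
  hence "card (?f ` {0..n}) \<le> n" by (metis card_atLeastLessThan card_mono finite_atLeastLessThan diff_zero)
  hence "\<not> inj_on ?f {0..n}" using card_image by fastforce
  then obtain a b where ab: "a \<in> {0..n}" "b \<in> {0..n}" "a \<noteq> b" "?f a = ?f b"
    unfolding inj_on_def by blast
  have "\<exists>a b. a < b \<and> ?f a = ?f b"
    using ab by (metis linorder_neqE_nat)
  then obtain a b where ab2: "a < b" "?f a = ?f b" by blast
  have "(\<sigma>^^a) ((\<sigma>^^(b-a)) i) = (\<sigma>^^a) i"
    using ab2 p_add[of a "b-a" i] by simp
  hence "(\<sigma>^^(b-a)) i = i" using p_inj p_in assms by blast
  thus ?thesis using ab2 by (intro exI[of _ "b-a"]) auto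
qed

definition per :: "nat \<Rightarrow> nat" where
  "per i = (LEAST k. 0 < k \<and> (\<sigma>^^k) i = i)"

lemma per_prop: assumes "i < n" shows "0 < per i \<and> (\<sigma>^^per i) i = i"
  unfolding per_def using ex_period[OF assms] by (rule LeastI_ex)

lemma per_pos: "i < n \<Longrightarrow> 0 < per i" using per_prop by blast
lemma per_ret: "i < n \<Longrightarrow> (\<sigma>^^per i) i = i" using per_prop by blast

lemma per_min: "0 < k \<Longrightarrow> k < per i \<Longrightarrow> (\<sigma>^^k) i \<noteq> i"
  unfolding per_def using not_less_Least by blast

lemma pow_mult_per: assumes "i < n" shows "(\<sigma>^^(q * per i)) i = i"
proof (induction q)
  case (Suc q)
  have "(\<sigma>^^(Suc q * per i)) i = (\<sigma>^^(q * per i)) ((\<sigma>^^per i) i)"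
    by (simp add: p_add add.commute)
  thus ?case using Suc per_ret[OF assms] by simp
qed simp

lemma pow_mod: assumes "i < n" shows "(\<sigma>^^k) i = (\<sigma>^^(k mod per i)) i"
proof -
  have "(\<sigma>^^k) i = (\<sigma>^^(k mod per i + k div per i * per i)) i"
    by (simp only: mod_div_mult_eq)
  hence "(\<sigma>^^k) i = (\<sigma>^^(k mod per i)) ((\<sigma>^^(k div per i * per i)) i)"
    by (simp add: p_add)
  thus ?thesis using pow_mult_per[OF assms] by simp
qed

lemma per_dvd: assumes "i < n" shows "(\<sigma>^^k) i = i \<longleftrightarrow> per i dvd k"
proof
  assume h: "(\<sigma>^^k) i = i"
  have "k mod per i < per i" using per_pos[OF assms] by simp
  moreover have "(\<sigma>^^(k mod per i)) i = i" using h pow_mod[OF assms, of k] by simp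
  ultimately have "k mod per i = 0" using per_min by (meson neq0_conv)
  thus "per i dvd k" by auto
next
  assume "per i dvd k"
  then obtain q where "k = q * per i" by (auto simp: dvd_def mult.commute)
  thus "(\<sigma>^^k) i = i" using pow_mult_per[OF assms] by simp
qed

lemma inj_per: assumes "i < n" shows "inj_on (\<lambda>k. (\<sigma>^^k) i) {0..<per i}"
proof (rule inj_onI, rule ccontr)
  fix a b assume ab: "a \<in> {0..<per i}" "b \<in> {0..<per i}" "(\<sigma>^^a) i = (\<sigma>^^b) i" "a \<noteq> b"
  have "\<exists>a b. a < b \<and> b < per i \<and> (\<sigma>^^a) i = (\<sigma>^^b) i"
    using ab by (metis atLeastLessThan_iff linorder_neqE_nat)
  then obtain a b where h: "a < b" "b < per i" "(\<sigma>^^a) i = (\<sigma>^^b) i" by blast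
  have "(\<sigma>^^a) ((\<sigma>^^(b-a)) i) = (\<sigma>^^a) i"
    using h p_add[of a "b-a" i] by simp
  hence "(\<sigma>^^(b-a)) i = i" using p_inj p_in assms by blast
  moreover have "0 < b - a" "b - a < per i" using h by auto
  ultimately show False using per_min by blast
qed

lemma orbit_eq: assumes "i < n" shows "perm_orbit \<sigma> i = (\<lambda>k. (\<sigma>^^k) i) ` {0..<per i}"
proof -
  have "(\<sigma>^^k) i \<in> (\<lambda>k. (\<sigma>^^k) i) ` {0..<per i}" for k
    using pow_mod[OF assms, of k] per_pos[OF assms] by auto
  thus ?thesis unfolding perm_orbit_def by auto
qed

lemma card_orbit: "i < n \<Longrightarrow> card (perm_orbit \<sigma> i) = per i"
  by (simp add: orbit_eq card_image inj_per)

lemma orbit_sub: "i < n \<Longrightarrow> perm_orbit \<sigma> i \<subseteq> {0..<n}"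
  unfolding perm_orbit_def using p_in by auto

lemma orbit_self: "i \<in> perm_orbit \<sigma> i"
  unfolding perm_orbit_def by (auto intro: exI[of _ 0])

lemma orbit_pow: "j \<in> perm_orbit \<sigma> i \<Longrightarrow> (\<sigma>^^k) j \<in> perm_orbit \<sigma> i"
  unfolding perm_orbit_def by (auto simp: p_add)

lemma orbit_s: "j \<in> perm_orbit \<sigma> i \<Longrightarrow> \<sigma> j \<in> perm_orbit \<sigma> i"
  using orbit_pow[of j i 1] by simp

lemma orbit_same: assumes "i < n" "j \<in> perm_orbit \<sigma> i"
  shows "perm_orbit \<sigma> j = perm_orbit \<sigma> i"
proof
  show "perm_orbit \<sigma> j \<subseteq> perm_orbit \<sigma> i"
    using assms(2) unfolding perm_orbit_def by (auto simp: p_add)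
next
  obtain a where a: "j = (\<sigma>^^a) i" using assms(2) unfolding perm_orbit_def by auto
  show "perm_orbit \<sigma> i \<subseteq> perm_orbit \<sigma> j"
  proof
    fix y assume "y \<in> perm_orbit \<sigma> i"
    then obtain k where k: "y = (\<sigma>^^k) i" unfolding perm_orbit_def by auto
    have pp: "per i * a \<ge> a" using per_pos[OF assms(1)] by simp
    have e: "k + per i * a - a + a = k + per i * a" using pp by linarith
    have "(\<sigma>^^(k + per i * a - a)) j = (\<sigma>^^(k + per i * a)) i"
      using a by (simp only: p_add e)
    also have "\<dots> = (\<sigma>^^k) i"
      using pow_mod[OF assms(1), of "k + per i * a"] pow_mod[OF assms(1), of k] by simp
    finally have "y = (\<sigma>^^(k + per i * a - a)) j" using k by simp
    thus "y \<in> perm_orbit \<sigma> j" unfolding perm_orbit_def by blast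
  qed
qed

lemma orbit_back: "i < n \<Longrightarrow> j \<in> perm_orbit \<sigma> i \<Longrightarrow> \<exists>k. (\<sigma>^^k) j = i"
proof -
  assume a: "i < n" "j \<in> perm_orbit \<sigma> i"
  have "i \<in> perm_orbit \<sigma> j" using orbit_same[OF a] orbit_self by simp
  thus ?thesis unfolding perm_orbit_def by auto
qed

lemma card_nb_le:
  assumes "p < n" "q \<in> perm_orbit \<sigma> p" "\<forall>j\<in>Ob. \<sigma> j \<in> Ob" "Ob \<subseteq> {0..<n}"
  shows "card {j\<in>Ob. E p j} \<le> card {j\<in>Ob. E q j}"
proof -
  obtain k where k: "q = (\<sigma>^^k) p" using assms(2) unfolding perm_orbit_def by auto
  have inv: "j \<in> Ob \<Longrightarrow> (\<sigma>^^l) j \<in> Ob" for j l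
    using assms(3) by (induction l) auto
  have "inj_on (\<sigma>^^k) {j\<in>Ob. E p j}"
  proof (rule inj_onI)
    fix a b assume "a \<in> {j\<in>Ob. E p j}" "b \<in> {j\<in>Ob. E p j}" "(\<sigma>^^k) a = (\<sigma>^^k) b"
    moreover have "a < n" "b < n" using calculation assms(4) by auto
    ultimately show "a = b" using p_inj by blast
  qed
  moreover have "(\<sigma>^^k) ` {j\<in>Ob. E p j} \<subseteq> {j\<in>Ob. E q j}"
    using inv k p_E assms(1,4) by auto
  moreover have "finite {j\<in>Ob. E q j}"
    by (rule finite_subset[of _ "{0..<n}"]) (use assms(4) in auto)
  ultimately show ?thesis by (meson card_inj_on_le)
qed

lemma card_nb_eq:
  assumes "p < n" "q \<in> perm_orbit \<sigma> p" "\<forall>j\<in>Ob. \<sigma> j \<in> Ob" "Ob \<subseteq> {0..<n}"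
  shows "card {j\<in>Ob. E p j} = card {j\<in>Ob. E q j}"
proof -
  have qn: "q < n" using assms(1,2) orbit_sub by (meson atLeastLessThan_iff subsetD)
  have "p \<in> perm_orbit \<sigma> q" using orbit_same[OF assms(1,2)] orbit_self by auto
  thus ?thesis using card_nb_le[OF assms] card_nb_le[OF qn _ assms(3,4)] by fastforce
qed

lemma card_orbit_idx:
  assumes "p < n"
  shows "card {j\<in>perm_orbit \<sigma> p. P j} = card {k\<in>{0..<per p}. P ((\<sigma>^^k) p)}"
proof -
  have "{j\<in>perm_orbit \<sigma> p. P j} = (\<lambda>k. (\<sigma>^^k) p) ` {k\<in>{0..<per p}. P ((\<sigma>^^k) p)}"
    using orbit_eq[OF assms] by auto
  moreover have "inj_on (\<lambda>k. (\<sigma>^^k) p) {k\<in>{0..<per p}. P ((\<sigma>^^k) p)}"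
    using inj_per[OF assms] by (rule inj_on_subset) auto
  ultimately show ?thesis using card_image by simp
qed

end



lemma signed_sum:
  fixes x :: "nat \<Rightarrow> real"
  assumes "finite F" "\<forall>j\<in>F. x j = a \<or> x j = - a"
  shows "\<exists>z::int. (\<Sum>j\<in>F. x j) = a * of_int z \<and> (even z \<longleftrightarrow> even (card F))"
  using assms
proof (induction F rule: finite_induct)
  case empty
  then show ?case by (auto intro: exI[of _ 0])
next
  case (insert j F)
  then obtain z where z: "(\<Sum>j\<in>F. x j) = a * of_int z" "even z \<longleftrightarrow> even (card F)" by auto
  have s: "(\<Sum>j\<in>insert j F. x j) = x j + (\<Sum>j\<in>F. x j)" using insert by simp
  have c: "card (insert j F) = Suc (card F)" using insert by simp
  show ?case
  proof (cases "x j = a")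
    case True
    show ?thesis using s c z True by (intro exI[of _ "z + 1"]) (auto simp: algebra_simps)
  next
    case False
    hence "x j = - a" using insert by auto
    thus ?thesis using s c z by (intro exI[of _ "z - 1"]) (auto simp: algebra_simps)
  qed
qed

locale setting = autc +
  fixes d :: nat and x :: "nat \<Rightarrow> real"
  assumes sg: "simple_graph n E"
    and reg: "regular_graph n E d"
    and xk: "kernel_vec n E x"
    and xu: "\<forall>y. kernel_vec n E y \<longrightarrow> (\<exists>c. \<forall>i. y i = c * x i)"
    and xnz: "\<forall>i<n. x i \<noteq> 0"
    and n2: "n \<ge> 2"
begin

lemma Eb: "E i j \<Longrightarrow> i < n \<and> j < n \<and> i \<noteq> j \<and> E j i"
  using sg unfolding simple_graph_def by blast

lemma Esym: "E i j = E j i" using Eb by blast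

lemma deg: "i < n \<Longrightarrow> card {j. j < n \<and> E i j} = d"
  using reg unfolding regular_graph_def by blast

lemma nopartial:
  assumes "kernel_vec n E y" "p < n" "q < n" "y p = 0" "y q \<noteq> 0" shows False
proof -
  obtain c where c: "\<forall>i. y i = c * x i" using xu assms(1) by blast
  have "c = 0" using c assms(2,4) xnz by auto
  thus False using c assms(5) by auto
qed

lemma adj_alt: "adj_mult n E y p = (\<Sum>j\<in>{j. j < n \<and> E p j}. y j)"
proof -
  have "adj_mult n E y p = (\<Sum>j\<in>{..<n}. if E p j then y j else 0)"
    unfolding adj_mult_def by (intro sum.cong) auto
  also have "\<dots> = (\<Sum>j\<in>{j\<in>{..<n}. E p j}. y j)"
    by (rule sum.inter_filter[symmetric]) simp
  also have "{j\<in>{..<n}. E p j} = {j. j < n \<and> E p j}" by auto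
  finally show ?thesis .
qed

lemma twin:
  assumes "u < n" "w < n" "z < n" "u \<noteq> w" "z \<noteq> u" "z \<noteq> w" "\<forall>j<n. E u j = E w j"
  shows False
proof -
  define y where "y = (\<lambda>i. if i = u then 1 else if i = w then -1 else (0::real))"
  have "adj_mult n E y i = 0" if "i < n" for i
  proof -
    have "adj_mult n E y i = (\<Sum>j\<in>{..<n}. (if j = u then (if E i u then 1 else 0) else 0)
        - (if j = w then (if E i w then 1 else 0) else (0::real)))"
      unfolding adj_mult_def y_def using assms(4) by (intro sum.cong) auto
    also have "\<dots> = (if E i u then 1 else 0) - (if E i w then 1 else 0)"
      using assms(1,2) by (simp add: sum_subtractf)
    also have "\<dots> = 0" using assms(7) Esym that by auto
    finally show ?thesis .
  qed
  hence "kernel_vec n E y" unfolding kernel_vec_def y_def using assms(1,2) by auto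
  thus False using nopartial[of y z u] assms unfolding y_def by auto
qed

lemma d_ne0: "d \<noteq> 0"
proof
  assume d0: "d = 0"
  have noE: "\<not> E i j" for i j
  proof
    assume e: "E i j"
    hence "i < n" "j < n" using Eb by auto
    hence "card {j. j < n \<and> E i j} = 0" using deg d0 by auto
    moreover have "finite {j. j < n \<and> E i j}" by auto
    ultimately show False using e \<open>j < n\<close> by auto
  qed
  define y where "y = (\<lambda>i::nat. if i = 0 then 1 else (0::real))"
  have "kernel_vec n E y" unfolding kernel_vec_def adj_mult_def y_def using noE n2 by auto
  thus False using nopartial[of y 1 0] n2 unfolding y_def by auto
qed

lemma nbr_sub: "{j. j < n \<and> E p j} \<subseteq> {0..<n} - {p}" using Eb by auto

lemma d_le: "d + 1 \<le> n"
proof -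
  have "d = card {j. j < n \<and> E 0 j}" using deg n2 by auto
  also have "\<dots> \<le> card ({0..<n} - {0})" using nbr_sub by (intro card_mono) auto
  also have "\<dots> = n - 1" using n2 by simp
  finally show ?thesis using n2 by simp
qed

lemma full_nbr:
  assumes "p < n" "q < n" "p \<noteq> q" "\<not> E p q" "n = d + 2"
  shows "{j. j < n \<and> E p j} = {0..<n} - {p, q}"
proof (rule card_subset_eq)
  show "{j. j < n \<and> E p j} \<subseteq> {0..<n} - {p, q}" using Eb assms by auto
  show "card {j. j < n \<and> E p j} = card ({0..<n} - {p, q})"
    using deg[OF assms(1)] assms by (simp add: card_Diff_subset)
qed auto

lemma not_cocktail: "n \<noteq> d + 2"
proof
  assume nd: "n = d + 2"
  have "d = card {j. j < n \<and> E 0 j}" using deg n2 by auto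
  hence "card {j. j < n \<and> E 0 j} < card ({0..<n} - {0})" using nd by simp
  hence "{j. j < n \<and> E 0 j} \<noteq> {0..<n} - {0}" by (metis less_irrefl)
  then obtain w where "w \<in> {0..<n} - {0}" "w \<notin> {j. j < n \<and> E 0 j}"
    using nbr_sub[of 0] by blast
  hence w: "w < n" "w \<noteq> 0" "\<not> E 0 w" by auto
  have "{j. j < n \<and> E 0 j} = {0..<n} - {0, w}" using full_nbr[of 0 w] w nd n2 by auto
  moreover have "{j. j < n \<and> E w j} = {0..<n} - {w, 0}" using full_nbr[of w 0] w nd n2 Esym by auto
  ultimately have "\<forall>j<n. E 0 j = E w j" by auto
  moreover have "n \<ge> 3" using nd d_ne0 by simp
  ultimately show False
    using twin[of 0 w "if w = 1 then 2 else 1"] w by (cases "w = 1") auto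
qed

lemma x_aut: "\<exists>c. \<forall>i<n. x (\<sigma> i) = c * x i"
proof -
  define y where "y = (\<lambda>i. if i < n then x (\<sigma> i) else 0)"
  have "adj_mult n E y i = 0" if "i < n" for i
  proof -
    have "adj_mult n E y i = (\<Sum>j\<in>{..<n}. (\<lambda>k. (if E (\<sigma> i) k then 1 else 0) * x k) (\<sigma> j))"
      unfolding adj_mult_def y_def using s_E that by (intro sum.cong) auto
    also have "\<dots> = (\<Sum>k\<in>{..<n}. (if E (\<sigma> i) k then 1 else 0) * x k)"
      using bij by (intro sum.reindex_bij_betw) (simp add: atLeast0LessThan)
    also have "\<dots> = 0" using xk s_in that unfolding kernel_vec_def adj_mult_def by auto
    finally show ?thesis .
  qed
  hence "kernel_vec n E y" unfolding kernel_vec_def y_def by auto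
  then obtain c where c: "\<forall>i. y i = c * x i" using xu by blast
  show ?thesis
  proof (intro exI[of _ c] allI impI)
    fix i assume "i < n"
    thus "x (\<sigma> i) = c * x i" using c[rule_format, of i] unfolding y_def by simp
  qed
qed

end



context setting
begin

lemma K_closed:
  assumes "p < n" "k \<in> {k\<in>{0..<per p}. E p ((\<sigma>^^k) p)}"
  shows "0 < k \<and> per p - k \<in> {k\<in>{0..<per p}. E p ((\<sigma>^^k) p)}"
proof -
  have k: "k < per p" "E p ((\<sigma>^^k) p)" using assms by auto
  have k0: "0 < k" using k Eb by (metis funpow_0 neq0_conv)
  have "(\<sigma>^^(per p - k)) ((\<sigma>^^k) p) = (\<sigma>^^per p) p" using k by (simp add: p_add)
  also have "\<dots> = p" using per_ret assms(1) by simp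
  finally have e: "(\<sigma>^^(per p - k)) ((\<sigma>^^k) p) = p" .
  have "E ((\<sigma>^^(per p - k)) p) ((\<sigma>^^(per p - k)) ((\<sigma>^^k) p))"
    using p_E k assms(1) p_in by simp
  hence "E p ((\<sigma>^^(per p - k)) p)" using e Esym by simp
  thus ?thesis using k0 k by auto
qed

lemma K_even:
  assumes "p < n" "odd (per p)"
  shows "even (card {k\<in>{0..<per p}. E p ((\<sigma>^^k) p)})"
proof -
  let ?K = "{k\<in>{0..<per p}. E p ((\<sigma>^^k) p)}"
  let ?m = "per p"
  define L where "L = {k\<in>?K. 2 * k < ?m}"
  define H where "H = {k\<in>?K. 2 * k > ?m}"
  have ne: "2 * k \<noteq> ?m" for k using assms(2) by (metis dvd_triv_left)
  have KLH: "?K = L \<union> H" unfolding L_def H_def using ne by (auto, metis linorder_neqE_nat)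
  have disj: "L \<inter> H = {}" unfolding L_def H_def by auto
  have img: "(\<lambda>k. ?m - k) ` L = H"
  proof
    show "(\<lambda>k. ?m - k) ` L \<subseteq> H"
    proof
      fix y assume "y \<in> (\<lambda>k. ?m - k) ` L"
      then obtain k where k: "k \<in> L" "y = ?m - k" by auto
      hence "k \<in> ?K" "2 * k < ?m" unfolding L_def by auto
      thus "y \<in> H" using K_closed[OF assms(1)] k unfolding H_def by auto
    qed
  next
    show "H \<subseteq> (\<lambda>k. ?m - k) ` L"
    proof
      fix y assume "y \<in> H"
      hence y: "y \<in> ?K" "2 * y > ?m" unfolding H_def by auto
      hence "?m - y \<in> ?K" "y < ?m" using K_closed[OF assms(1)] by auto
      hence "?m - y \<in> L" "y = ?m - (?m - y)" using y unfolding L_def by auto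
      thus "y \<in> (\<lambda>k. ?m - k) ` L" by blast
    qed
  qed
  have inj: "inj_on (\<lambda>k. ?m - k) L" unfolding L_def by (intro inj_onI) auto
  have "card ?K = card L + card H" unfolding KLH using disj
    by (intro card_Un_disjoint) (auto simp: L_def H_def)
  also have "card H = card L" using img inj card_image by fastforce
  finally show ?thesis by simp
qed

lemma K_one:
  assumes "p < n" "card {k\<in>{0..<per p}. E p ((\<sigma>^^k) p)} = 1"
  shows "\<exists>h. per p = 2 * h \<and> E p ((\<sigma>^^h) p)"
proof -
  obtain h where h: "{k\<in>{0..<per p}. E p ((\<sigma>^^k) p)} = {h}"
    using assms(2) card_1_singleton_iff by (metis One_nat_def)
  hence hK: "h \<in> {k\<in>{0..<per p}. E p ((\<sigma>^^k) p)}" by auto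
  hence "per p - h = h" "h < per p" using K_closed[OF assms(1) hK] h by auto
  thus ?thesis using hK by (intro exI[of _ h]) auto
qed

end



lemma det_lemma:
  fixes x0 x1 a b b' c' :: real
  assumes "x0 * a + x1 * b = 0" "x0 * b' + x1 * c' = 0" "x0 \<noteq> 0"
  shows "a * c' = b * b'"
proof -
  have "x0 * (a * c' - b * b') = c' * (x0 * a + x1 * b) - b * (x0 * b' + x1 * c')"
    by (simp add: algebra_simps)
  hence "x0 * (a * c' - b * b') = 0" using assms by simp
  thus ?thesis using assms(3) by simp
qed

locale two = setting +
  fixes v0 :: nat
  assumes v0n: "v0 < n" and disj: "perm_orbit \<sigma> 0 \<inter> perm_orbit \<sigma> v0 = {}"
    and cover: "perm_orbit \<sigma> 0 \<union> perm_orbit \<sigma> v0 = {0..<n}" and eqper: "per v0 = per 0"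
begin

abbreviation "O1 \<equiv> perm_orbit \<sigma> 0"
abbreviation "O2 \<equiv> perm_orbit \<sigma> v0"
abbreviation "m \<equiv> per 0"

lemma n0: "0 < n" using n2 by simp

lemma O1s: "j \<in> O1 \<Longrightarrow> j < n" using orbit_sub[OF n0] by auto
lemma O2s: "j \<in> O2 \<Longrightarrow> j < n" using orbit_sub[OF v0n] by auto
lemma fin1: "finite {j\<in>O1. P j}" by (rule finite_subset[of _ "{0..<n}"]) (auto dest: O1s)
lemma fin2: "finite {j\<in>O2. P j}" by (rule finite_subset[of _ "{0..<n}"]) (auto dest: O2s)
lemma finO1: "finite O1" using fin1[of "\<lambda>_. True"] by simp
lemma finO2: "finite O2" using fin2[of "\<lambda>_. True"] by simp

lemma n_eq: "n = 2 * m"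
proof -
  have "n = card (O1 \<union> O2)" using cover by simp
  also have "\<dots> = card O1 + card O2" using disj finO1 finO2 by (simp add: card_Un_disjoint)
  also have "\<dots> = 2 * m" using card_orbit n0 v0n eqper by simp
  finally show ?thesis .
qed

lemma m0: "0 < m" using per_pos n0 by simp

lemma nbr_split: "{j. j < n \<and> E p j} = {j\<in>O1. E p j} \<union> {j\<in>O2. E p j}"
  using cover Eb by auto

lemma adj_split: "adj_mult n E y p = (\<Sum>j\<in>{j\<in>O1. E p j}. y j) + (\<Sum>j\<in>{j\<in>O2. E p j}. y j)"
  unfolding adj_alt nbr_split using disj fin1 fin2 by (intro sum.union_disjoint) auto

lemma deg_split: "p < n \<Longrightarrow> card {j\<in>O1. E p j} + card {j\<in>O2. E p j} = d"
proof -
  assume p: "p < n"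
  have "card ({j\<in>O1. E p j} \<union> {j\<in>O2. E p j}) = card {j\<in>O1. E p j} + card {j\<in>O2. E p j}"
    by (rule card_Un_disjoint[OF fin1 fin2]) (use disj in auto)
  thus ?thesis using deg[OF p] unfolding nbr_split by simp
qed

lemma inv_card:
  assumes "q < n" "u \<in> perm_orbit \<sigma> q" "Ob = O1 \<or> Ob = O2"
  shows "card {j\<in>Ob. E u j} = card {j\<in>Ob. E q j}"
proof -
  have "\<forall>j\<in>Ob. \<sigma> j \<in> Ob" "Ob \<subseteq> {0..<n}"
    using assms(3) orbit_s orbit_sub n0 v0n by auto
  thus ?thesis using card_nb_eq[OF assms(1,2)] by auto
qed

lemma RR: "card {j\<in>O2. E 0 j} = card {j\<in>O1. E v0 j}"
proof -
  have "card (SIGMA u:O1. {j\<in>O2. E u j}) = (\<Sum>u\<in>O1. card {j\<in>O2. E u j})"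
    using finO1 fin2 by simp
  also have "\<dots> = (\<Sum>u\<in>O1. card {j\<in>O2. E 0 j})"
    using inv_card[OF n0] by (intro sum.cong) auto
  also have "\<dots> = m * card {j\<in>O2. E 0 j}" using card_orbit n0 by simp
  finally have a: "card (SIGMA u:O1. {j\<in>O2. E u j}) = m * card {j\<in>O2. E 0 j}" .
  have "card (SIGMA u:O2. {j\<in>O1. E u j}) = (\<Sum>u\<in>O2. card {j\<in>O1. E u j})"
    using finO2 fin1 by simp
  also have "\<dots> = (\<Sum>u\<in>O2. card {j\<in>O1. E v0 j})"
    using inv_card[OF v0n] by (intro sum.cong) auto
  also have "\<dots> = m * card {j\<in>O1. E v0 j}" using card_orbit v0n eqper by simp
  finally have b: "card (SIGMA u:O2. {j\<in>O1. E u j}) = m * card {j\<in>O1. E v0 j}" .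
  have im: "(\<lambda>(a, b). (b, a)) ` (SIGMA u:O1. {j\<in>O2. E u j}) = (SIGMA u:O2. {j\<in>O1. E u j})"
    using Esym by auto
  have "inj_on (\<lambda>(a, b). (b, a)) (SIGMA u:O1. {j\<in>O2. E u j})"
    by (auto simp: inj_on_def)
  hence "card ((\<lambda>(a, b). (b, a)) ` (SIGMA u:O1. {j\<in>O2. E u j})) = card (SIGMA u:O1. {j\<in>O2. E u j})"
    by (rule card_image)
  hence "card (SIGMA u:O1. {j\<in>O2. E u j}) = card (SIGMA u:O2. {j\<in>O1. E u j})"
    using im by simp
  thus ?thesis using a b m0 by simp
qed

lemma restrict_false:
  assumes "(\<forall>u\<in>O1. \<forall>j\<in>O2. \<not> E u j) \<or> ((\<forall>u\<in>O1. \<forall>j\<in>O1. \<not> E u j) \<and> (\<forall>u\<in>O2. \<forall>j\<in>O2. \<not> E u j))"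
  shows False
proof -
  define y where "y = (\<lambda>i. if i \<in> O1 then x i else 0)"
  have ay: "adj_mult n E y i = (\<Sum>j\<in>{j\<in>O1. E i j}. x j)" for i
  proof -
    have "(\<Sum>j\<in>{j\<in>O2. E i j}. y j) = 0" using disj unfolding y_def by (intro sum.neutral) auto
    moreover have "(\<Sum>j\<in>{j\<in>O1. E i j}. y j) = (\<Sum>j\<in>{j\<in>O1. E i j}. x j)"
      unfolding y_def by (intro sum.cong) auto
    ultimately show ?thesis using adj_split[of y i] by simp
  qed
  have ax: "(\<Sum>j\<in>{j\<in>O1. E i j}. x j) + (\<Sum>j\<in>{j\<in>O2. E i j}. x j) = 0" if "i < n" for i
    using xk that adj_split[of x i] unfolding kernel_vec_def by simp
  have "adj_mult n E y i = 0" if i: "i < n" for i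
  proof (cases "i \<in> O1")
    case True
    show ?thesis
    proof (cases "\<forall>u\<in>O1. \<forall>j\<in>O2. \<not> E u j")
      case True2: True
      hence "(\<Sum>j\<in>{j\<in>O2. E i j}. x j) = 0" using True by (intro sum.neutral) auto
      thus ?thesis using ax[OF i] ay[of i] by simp
    next
      case False
      hence "(\<Sum>j\<in>{j\<in>O1. E i j}. x j) = 0" using True assms by (intro sum.neutral) auto
      thus ?thesis using ay[of i] by simp
    qed
  next
    case False
    have "i \<in> O1 \<union> O2" using cover i by simp
    hence iO2: "i \<in> O2" using False by blast
    show ?thesis
    proof (cases "\<forall>u\<in>O1. \<forall>j\<in>O2. \<not> E u j")
      case True
      hence "(\<Sum>j\<in>{j\<in>O1. E i j}. x j) = 0" using iO2 Esym by (intro sum.neutral) auto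
      thus ?thesis using ay[of i] by simp
    next
      case False
      hence "(\<Sum>j\<in>{j\<in>O2. E i j}. x j) = 0" using iO2 assms by (intro sum.neutral) auto
      thus ?thesis using ax[OF i] ay[of i] by simp
    qed
  qed
  moreover have "y i = 0" if "i \<ge> n" for i using that O1s unfolding y_def by force
  ultimately have "kernel_vec n E y" unfolding kernel_vec_def by auto
  moreover have "v0 \<notin> O1" using disj orbit_self by blast
  ultimately show False
    using nopartial[of y v0 0] v0n n0 xnz orbit_self[of 0] unfolding y_def by auto
qed

end



context two
begin

lemma x_c: "\<exists>c. (c = 1 \<or> c = -1) \<and> (\<forall>i<n. \<forall>k. x ((\<sigma>^^k) i) = c ^ k * x i)"
proof -
  obtain c where c: "\<forall>i<n. x (\<sigma> i) = c * x i" using x_aut by blast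
  have pw: "x ((\<sigma>^^k) i) = c ^ k * x i" if "i < n" for i k
  proof (induction k)
    case (Suc k)
    have "x ((\<sigma>^^Suc k) i) = x (\<sigma> ((\<sigma>^^k) i))" by simp
    also have "\<dots> = c * x ((\<sigma>^^k) i)" using c p_in that by simp
    finally show ?case using Suc by simp
  qed simp
  have "x 0 = c ^ m * x 0" using pw[OF n0, of m] per_ret[OF n0] by simp
  hence "c ^ m = 1" using xnz n0 by simp
  hence "\<bar>c\<bar> ^ m = 1 ^ m" by (metis power_abs abs_one power_one)
  hence "\<bar>c\<bar> = 1" using power_eq_imp_eq_base m0 by (metis abs_ge_zero zero_le_one)
  hence "c = 1 \<or> c = -1" by auto
  thus ?thesis using pw by blast
qed

lemma main: "even n \<and> even d \<and> (4 dvd n \<or> 4 dvd d) \<and> d \<ge> 4 \<and> n \<ge> d + 4"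
proof -
  obtain c where c1: "c = 1 \<or> c = -1" and pw: "\<And>i k. i < n \<Longrightarrow> x ((\<sigma>^^k) i) = c ^ k * x i"
    using x_c by blast
  have pm: "x j = x i \<or> x j = - x i" if ij: "i < n" "j \<in> perm_orbit \<sigma> i" for i j
  proof -
    obtain k where k: "j = (\<sigma>^^k) i" using ij(2) unfolding perm_orbit_def by auto
    have "c ^ k = 1 \<or> c ^ k = -1" using c1 by (cases "even k") (auto simp: neg_one_even_power neg_one_odd_power)
    thus ?thesis using pw[OF ij(1), of k] k by auto
  qed
  define S where "S = card {j\<in>O1. E 0 j}"
  define R where "R = card {j\<in>O2. E 0 j}"
  define R' where "R' = card {j\<in>O1. E v0 j}"
  define T where "T = card {j\<in>O2. E v0 j}"
  have RR': "R = R'" unfolding R_def R'_def using RR .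
  have dS: "S + R = d" unfolding S_def R_def using deg_split n0 by simp
  have dT: "R' + T = d" unfolding T_def R'_def using deg_split v0n by simp
  have ST: "S = T" using dS dT RR' by simp
  obtain A1 where A1: "(\<Sum>j\<in>{j\<in>O1. E 0 j}. x j) = x 0 * of_int A1" "even A1 \<longleftrightarrow> even S"
    using signed_sum[OF fin1, of "E 0" x "x 0"] pm[OF n0] unfolding S_def by auto
  obtain B1 where B1: "(\<Sum>j\<in>{j\<in>O2. E 0 j}. x j) = x v0 * of_int B1" "even B1 \<longleftrightarrow> even R"
    using signed_sum[OF fin2, of "E 0" x "x v0"] pm[OF v0n] unfolding R_def by auto
  obtain B2 where B2: "(\<Sum>j\<in>{j\<in>O1. E v0 j}. x j) = x 0 * of_int B2" "even B2 \<longleftrightarrow> even R'"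
    using signed_sum[OF fin1, of "E v0" x "x 0"] pm[OF n0] unfolding R'_def by auto
  obtain C2 where C2: "(\<Sum>j\<in>{j\<in>O2. E v0 j}. x j) = x v0 * of_int C2" "even C2 \<longleftrightarrow> even T"
    using signed_sum[OF fin2, of "E v0" x "x v0"] pm[OF v0n] unfolding T_def by auto
  have k0: "(\<Sum>j\<in>{j\<in>O1. E p j}. x j) + (\<Sum>j\<in>{j\<in>O2. E p j}. x j) = 0" if "p < n" for p
    using xk that adj_split[of x p] unfolding kernel_vec_def by simp
  have "of_int A1 * of_int C2 = (of_int B1 * of_int B2 :: real)"
    using det_lemma[of "x 0" "of_int A1" "x v0" "of_int B1" "of_int B2" "of_int C2"]
      k0[OF n0] k0[OF v0n] A1 B1 B2 C2 xnz n0 by simp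
  hence det: "A1 * C2 = B1 * B2" by (metis of_int_eq_iff of_int_mult)
  have "even S \<longleftrightarrow> even R"
  proof -
    have "even (A1 * C2) \<longleftrightarrow> even S" using A1 C2 ST by auto
    moreover have "even (B1 * B2) \<longleftrightarrow> even R" using B1 B2 RR' by auto
    ultimately show ?thesis using det by simp
  qed
  hence evd: "even d" using dS by auto
  have evn: "even n" using n_eq by simp
  have four: "4 dvd n \<or> 4 dvd d"
  proof (cases "c = 1")
    case True
    have const: "x j = x i" if "i < n" "j \<in> perm_orbit \<sigma> i" for i j
      using that pw True unfolding perm_orbit_def by auto
    have "(\<Sum>j\<in>{j\<in>O1. E p j}. x j) = x 0 * card {j\<in>O1. E p j}" for p
      using const[OF n0] by (simp add: mult.commute)
    moreover have "(\<Sum>j\<in>{j\<in>O2. E p j}. x j) = x v0 * card {j\<in>O2. E p j}" for p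
      using const[OF v0n] by (simp add: mult.commute)
    ultimately have "real S * real T = real R * real R'"
      using det_lemma[of "x 0" "real S" "x v0" "real R" "real R'" "real T"]
        k0[OF n0] k0[OF v0n] xnz n0 unfolding S_def R_def R'_def T_def by simp
    hence "S * S = R * R" using ST RR' by (metis of_nat_eq_iff of_nat_mult)
    hence "S ^ 2 = R ^ 2" by (simp add: power2_eq_square)
    hence SR: "S = R" using power_eq_imp_eq_base[of S 2 R] by simp
    show ?thesis
    proof (cases "even m")
      case True
      then show ?thesis using n_eq by auto
    next
      case False
      have "S = card {k\<in>{0..<m}. E 0 ((\<sigma>^^k) 0)}" unfolding S_def using card_orbit_idx[OF n0] .
      hence "even S" using K_even[OF n0] False by simp
      thus ?thesis using dS SR by auto
    qed
  next
    case False
    hence cm: "c = -1" using c1 by simp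
    have "x 0 = c ^ m * x 0" using pw[OF n0, of m] per_ret[OF n0] by simp
    hence "even m" using cm xnz n0 by (cases "even m") (auto simp: neg_one_odd_power)
    thus ?thesis using n_eq by auto
  qed
  have d2: "d \<noteq> 2"
  proof
    assume d2: "d = 2"
    have empty_of: "\<forall>u\<in>perm_orbit \<sigma> q. \<forall>j\<in>Ob. \<not> E u j"
      if "q < n" "Ob = O1 \<or> Ob = O2" "card {j\<in>Ob. E q j} = 0" for q Ob
    proof (intro ballI)
      fix u j assume u: "u \<in> perm_orbit \<sigma> q" and j: "j \<in> Ob"
      have "card {j\<in>Ob. E u j} = 0" using inv_card[OF that(1) u that(2)] that(3) by simp
      moreover have "finite {j\<in>Ob. E u j}" using that(2) fin1 fin2 by auto
      ultimately show "\<not> E u j" using j by auto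
    qed
    have "S = 0 \<or> R = 0 \<or> (S = 1 \<and> R = 1)" using dS d2 \<open>even S \<longleftrightarrow> even R\<close> by presburger
    moreover have "R \<noteq> 0"
    proof
      assume "R = 0"
      hence "card {j\<in>O2. E 0 j} = 0" unfolding R_def .
      hence "\<forall>u\<in>O1. \<forall>j\<in>O2. \<not> E u j" by (intro empty_of[OF n0]) blast+
      thus False using restrict_false by blast
    qed
    moreover have "S \<noteq> 0"
    proof
      assume "S = 0"
      hence "card {j\<in>O1. E 0 j} = 0" "card {j\<in>O2. E v0 j} = 0" using ST unfolding S_def T_def by simp_all
      hence c1: "card {j\<in>O1. E 0 j} = 0" and c2: "card {j\<in>O2. E v0 j} = 0" by simp_all
      have "\<forall>u\<in>O1. \<forall>j\<in>O1. \<not> E u j" using c1 by (intro empty_of[OF n0]) blast+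
      moreover have "\<forall>u\<in>O2. \<forall>j\<in>O2. \<not> E u j" using c2 by (intro empty_of[OF v0n]) blast+
      ultimately show False using restrict_false by blast
    qed
    ultimately have S1: "S = 1" "R = 1" "T = 1" using ST by auto
    obtain h where h: "m = 2 * h" "E 0 ((\<sigma>^^h) 0)"
      using K_one[OF n0] S1 card_orbit_idx[OF n0] unfolding S_def by auto
    obtain h' where h': "per v0 = 2 * h'" "E v0 ((\<sigma>^^h') v0)"
      using K_one[OF v0n] S1 card_orbit_idx[OF v0n] unfolding T_def by auto
    have hh: "h' = h" using h h' eqper by simp
    obtain z where z: "{j\<in>O2. E 0 j} = {z}" using S1 unfolding R_def by (metis card_1_singleton_iff One_nat_def)
    have zO2: "z \<in> O2" and E0z: "E 0 z" using z by auto
    have zn: "z < n" using O2s zO2 by simp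
    define w where "w = (\<sigma>^^h) z"
    define a where "a = (\<sigma>^^h) 0"
    have aO1: "a \<in> O1" unfolding a_def using orbit_pow orbit_self by blast
    have wO2: "w \<in> O2" unfolding w_def using orbit_pow zO2 by blast
    have an: "a < n" using O1s aO1 by simp
    have wn: "w < n" using O2s wO2 by simp
    have N0: "{j. j < n \<and> E 0 j} = {a, z}"
    proof -
      have "a \<in> {j\<in>O1. E 0 j}" using aO1 h unfolding a_def by simp
      moreover have "card {j\<in>O1. E 0 j} = 1" using S1 unfolding S_def by simp
      ultimately have "{j\<in>O1. E 0 j} = {a}" by (metis card_1_singleton_iff One_nat_def singletonD)
      thus ?thesis using nbr_split z by auto
    qed
    have Ewa: "E w a" using p_E[OF n0 zn, of h] E0z Esym unfolding w_def a_def by simp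
    obtain k where k: "z = (\<sigma>^^k) v0" using zO2 unfolding perm_orbit_def by auto
    have "E ((\<sigma>^^k) v0) ((\<sigma>^^k) ((\<sigma>^^h) v0))"
      using p_E[OF v0n p_in[OF v0n], of k h] h' hh by simp
    moreover have "(\<sigma>^^k) ((\<sigma>^^h) v0) = w" unfolding w_def k by (simp add: p_add add.commute)
    ultimately have Ewz: "E w z" using k Esym by simp
    have az: "a \<noteq> z" using aO1 zO2 disj by blast
    have Nw: "{j. j < n \<and> E w j} = {a, z}"
    proof (rule card_subset_eq[symmetric])
      show "finite {j. j < n \<and> E w j}" by simp
      show "{a, z} \<subseteq> {j. j < n \<and> E w j}" using Ewa Ewz an zn by auto
      show "card {a, z} = card {j. j < n \<and> E w j}" using deg[OF wn] d2 az by simp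
    qed
    have "0 \<in> O1" by (rule orbit_self)
    hence w0: "w \<noteq> 0" using wO2 disj by (metis IntI empty_iff)
    have n4: "n \<ge> 4" using n_eq h m0 by simp
    have "\<forall>j<n. E 0 j = E w j" using N0 Nw by (metis (mono_tags, lifting) mem_Collect_eq)
    thus False using twin[of 0 w "if w = 1 then 2 else 1"] w0 wn n4 by (cases "w = 1") auto
  qed
  have "d \<ge> 4" using evd d_ne0 d2 by presburger
  moreover have "n \<ge> d + 4" using d_le evd evn not_cocktail by presburger
  ultimately show ?thesis using evd evn four by simp
qed

end



theorem mainTheorem18:
  fixes n d :: nat and E :: "nat \<Rightarrow> nat \<Rightarrow> bool"
  assumes "simple_graph n E" and "regular_graph n E d"
    and "bicirculant n E" and "nut_graph n E"
  shows "even n \<and> even d \<and> (4 dvd n \<or> 4 dvd d) \<and> d \<ge> 4 \<and> n \<ge> d + 4"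
proof -
  obtain \<sigma> where aut: "graph_automorphism n E \<sigma>" and c2: "card (perm_orbits n \<sigma>) = 2"
    and eqc: "\<forall>O1\<in>perm_orbits n \<sigma>. \<forall>O2\<in>perm_orbits n \<sigma>. card O1 = card O2"
    using assms(3) unfolding bicirculant_def by blast
  obtain x where n2: "n \<ge> 2" and xk: "kernel_vec n E x"
    and xu: "\<forall>y. kernel_vec n E y \<longrightarrow> (\<exists>c. \<forall>i. y i = c * x i)" and xnz: "\<forall>i<n. x i \<noteq> 0"
    using assms(4) unfolding nut_graph_def by blast
  interpret autc n E \<sigma> by unfold_locales (rule aut)
  have n0: "0 < n" using n2 by simp
  let ?P = "perm_orbits n \<sigma>"
  have fin: "finite ?P" unfolding perm_orbits_def by simp
  have O1in: "perm_orbit \<sigma> 0 \<in> ?P" unfolding perm_orbits_def using n0 by simp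
  obtain O2 where O2: "O2 \<in> ?P" "O2 \<noteq> perm_orbit \<sigma> 0"
  proof -
    assume h: "\<And>O2. O2 \<in> ?P \<Longrightarrow> O2 \<noteq> perm_orbit \<sigma> 0 \<Longrightarrow> thesis"
    show thesis
    proof (rule ccontr)
      assume "\<not> thesis"
      hence "?P \<subseteq> {perm_orbit \<sigma> 0}" using h by blast
      hence "card ?P \<le> 1" by (metis card.empty card.insert empty_iff finite.intros(1) card_mono insert_absorb le_zero_eq one_le_numeral subset_singletonD zero_le_one card_1_singleton_iff order_refl One_nat_def)
      thus False using c2 by simp
    qed
  qed
  obtain v0 where v0n: "v0 < n" and O2v: "O2 = perm_orbit \<sigma> v0"
    using O2(1) unfolding perm_orbits_def by auto
  have Peq: "?P = {perm_orbit \<sigma> 0, perm_orbit \<sigma> v0}"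
  proof (rule card_subset_eq[symmetric])
    show "finite ?P" by (rule fin)
    show "{perm_orbit \<sigma> 0, perm_orbit \<sigma> v0} \<subseteq> ?P" using O1in O2 O2v by auto
    show "card {perm_orbit \<sigma> 0, perm_orbit \<sigma> v0} = card ?P" using c2 O2 O2v by simp
  qed
  have cover: "perm_orbit \<sigma> 0 \<union> perm_orbit \<sigma> v0 = {0..<n}"
  proof
    show "perm_orbit \<sigma> 0 \<union> perm_orbit \<sigma> v0 \<subseteq> {0..<n}" using orbit_sub n0 v0n by auto
    show "{0..<n} \<subseteq> perm_orbit \<sigma> 0 \<union> perm_orbit \<sigma> v0"
    proof
      fix i assume "i \<in> {0..<n}"
      hence "perm_orbit \<sigma> i \<in> ?P" unfolding perm_orbits_def by simp
      hence "perm_orbit \<sigma> i = perm_orbit \<sigma> 0 \<or> perm_orbit \<sigma> i = perm_orbit \<sigma> v0" using Peq by simp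
      thus "i \<in> perm_orbit \<sigma> 0 \<union> perm_orbit \<sigma> v0" using orbit_self[of i] by auto
    qed
  qed
  have disj: "perm_orbit \<sigma> 0 \<inter> perm_orbit \<sigma> v0 = {}"
  proof (rule ccontr)
    assume "perm_orbit \<sigma> 0 \<inter> perm_orbit \<sigma> v0 \<noteq> {}"
    then obtain j where j: "j \<in> perm_orbit \<sigma> 0" "j \<in> perm_orbit \<sigma> v0" by blast
    have "perm_orbit \<sigma> j = perm_orbit \<sigma> 0" using orbit_same[OF n0 j(1)] .
    moreover have "perm_orbit \<sigma> j = perm_orbit \<sigma> v0" using orbit_same[OF v0n j(2)] .
    ultimately show False using O2 O2v by simp
  qed
  have eqper: "per v0 = per 0"
    using eqc O1in O2 O2v card_orbit n0 v0n by metis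
  interpret two n E \<sigma> d x v0
    by unfold_locales (use assms(1,2) xk xu xnz n2 v0n disj cover eqper in auto)
  show ?thesis using main .
qed

end
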